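(* Let $\mathfrak a$ be a skew-symmetric invariant $n$-ary algebra which is irreducible but not simple, and let $\mathfrak i$ be a maximal non-trivial ideal of $\mathfrak a$ of codimension $1$. Then $\mathfrak a$ is isomorphic to a certain double extension (generalized double extension of some $\mathfrak g$ by some one-dimensional $\mathfrak h$ via $\psi_1,\dots,\psi_{n+1}$) with $\nu=0$ and $\psi_i=0$ for all $i\neq1$.
   Context: A skew-symmetric invariant $n$-ary algebra is a commutative invariant $n$-ary superalgebra whose underlying superspace is purely odd; concretely, a finite-dimensional vector space over $\mathbb K=\mathbb R$ or $\mathbb C$ with a non-degenerate symmetric bilinear form $(\,,)$ and a skew-symmetric $n$-linear map $\{\,\}$ satisfying $(a_0,\{a_1,\dots,a_n\})=-(a_1,\{a_0,a_2,\dots,a_n\})$. (In general: a commutative $n$-ary superalgebra satisfies $\{\dots,a_i,a_{i+1},\dots\}=(-1)^{\bar a_i\bar a_{i+1}}\{\dots,a_{i+1},a_i,\dots\}$, and invariance with respect to an even super-skew-symmetric form, $(a,b)=-(-1)^{\bar a\bar b}(b,a)$, means $(a_0,\{a_1,\dots,a_n\})=(-1)^{\bar a_0\bar a_1}(a_1,\{a_0,a_2,\dots,a_n\})$.) Ideal: subspace $\mathfrak i$ with $\{\mathfrak a,\dots,\mathfrak a,\mathfrak i\}\subset\mathfrak i$. Simple: not trivial one-dimensional and no proper ideals. Irreducible: not a direct sum of two ideals on which the form is non-degenerate. Derived potential: $S^*V$ (super-symmetric algebra of a superspace $V$ with such a form) carries the Poisson bracket with $[x,y]=(x,y)$ on $V$,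 $[v,w_1w_2]=[v,w_1]w_2+(-1)^{\bar v\bar w_1}w_1[v,w_2]$, $[v,w]=-(-1)^{\bar v\bar w}[w,v]$; every commutative invariant $n$-ary superalgebra on $V$ is $\{a_1,\dots,a_n\}=[a_1,[\dots,[a_n,\mu]\dots]]$ for some $\mu\in S^{n+1}V$ (its derived potential). Generalized double extension: given a commutative invariant $n$-ary superalgebra $\mathfrak g$ with derived potential $\mu\in S^{n+1}\mathfrak g$ and a commutative $n$-ary superalgebra $\mathfrak h$ with multiplication $\nu\in S^n\mathfrak h^*\otimes\mathfrak h\cong S^n\mathfrak h^*\cdot\mathfrak h\subset S^*(\mathfrak h\oplus\mathfrak h^* )$, where $\mathfrak h\oplus\mathfrak h^*$ has the form with $\mathfrak h,\mathfrak h^*$ isotropic, $(\alpha,x)=\alpha(x)$, $(x,\alpha)=-(-1)^{\bar\alpha\bar x}\alpha(x)$, the commutative invariant $n$-ary superalgebra on $\mathfrak d=\mathfrak g\oplus\mathfrak h\oplus\mathfrak h^*$ (orthogonal sum of forms) with derived potential $\mu+\nu+\sum_{i=1}^{n+1}\psi_i$, $\psi_i\in S^i\mathfrak h^*\cdot S^{n-i+1}\mathfrak g$, is the generalized double extension of $\mathfrak g$ by $\mathfrak h$ via the $\psi_i$; it is called a double extension if $\psi_n=\psi_{n+1}=0$. *)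

theory Defs
  imports Complex_Main "HOL-Library.Product_Plus"
begin

definition fin_dim :: "('k::field \<Rightarrow> 'v::ab_group_add \<Rightarrow> 'v) \<Rightarrow> 'v set \<Rightarrow> bool" where
  "fin_dim scale V \<longleftrightarrow> (\<exists>S. S \<subseteq> V \<and> finite S \<and> module.span scale S = V)"

definition nondeg_on :: "('v::zero \<Rightarrow> 'v \<Rightarrow> 'k::zero) \<Rightarrow> 'v set \<Rightarrow> bool" where
  "nondeg_on B V \<longleftrightarrow> (\<forall>x\<in>V. (\<forall>y\<in>V. B x y = 0) \<longrightarrow> x = 0)"

definition ssia :: "('k::field \<Rightarrow> 'v::ab_group_add \<Rightarrow> 'v) \<Rightarrow> 'v set \<Rightarrow> ('v \<Rightarrow> 'v \<Rightarrow> 'k)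
    \<Rightarrow> ('v list \<Rightarrow> 'v) \<Rightarrow> nat \<Rightarrow> bool" where
  "ssia scale V B P n \<longleftrightarrow>
     module.subspace scale V \<and> fin_dim scale V \<and>
     \<comment> \<open>symmetric bilinear non-degenerate form\<close>
     (\<forall>x\<in>V. \<forall>y\<in>V. \<forall>z\<in>V. \<forall>c. B (x + y) z = B x z + B y z \<and> B (scale c x) z = c * B x z) \<and>
     (\<forall>x\<in>V. \<forall>y\<in>V. B x y = B y x) \<and>
     nondeg_on B V \<and>
     \<comment> \<open>n-linear product with values in V\<close>
     (\<forall>as. set as \<subseteq> V \<and> length as = n \<longrightarrow> P as \<in> V) \<and>
     (\<forall>as i x y c. set as \<subseteq> V \<and> length as = n \<and> i < n \<and> x \<in> V \<and> y \<in> V \<longrightarrow>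
        P (as[i := x + y]) = P (as[i := x]) + P (as[i := y]) \<and>
        P (as[i := scale c x]) = scale c (P (as[i := x]))) \<and>
     \<comment> \<open>skew-symmetry\<close>
     (\<forall>as i. set as \<subseteq> V \<and> length as = n \<and> Suc i < n \<longrightarrow>
        P (as[i := as ! Suc i, Suc i := as ! i]) = - P as) \<and>
     \<comment> \<open>invariance\<close>
     (\<forall>a0 a1 as. a0 \<in> V \<and> a1 \<in> V \<and> set as \<subseteq> V \<and> length as = n - 1 \<longrightarrow>
        B a0 (P (a1 # as)) = - B a1 (P (a0 # as)))"

definition ideal :: "('k::field \<Rightarrow> 'v::ab_group_add \<Rightarrow> 'v) \<Rightarrow> 'v set \<Rightarrow> ('v list \<Rightarrow> 'v)
    \<Rightarrow> nat \<Rightarrow> 'v set \<Rightarrow> bool" where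
  "ideal scale V P n I \<longleftrightarrow> module.subspace scale I \<and> I \<subseteq> V \<and>
     (\<forall>as x. set as \<subseteq> V \<and> length as = n - 1 \<and> x \<in> I \<longrightarrow> P (as @ [x]) \<in> I)"

definition simple :: "('k::field \<Rightarrow> 'v::ab_group_add \<Rightarrow> 'v) \<Rightarrow> 'v set \<Rightarrow> ('v list \<Rightarrow> 'v)
    \<Rightarrow> nat \<Rightarrow> bool" where
  "simple scale V P n \<longleftrightarrow>
     \<not> (vector_space.dim scale V = 1 \<and> (\<forall>as. set as \<subseteq> V \<and> length as = n \<longrightarrow> P as = 0)) \<and>
     (\<forall>I. ideal scale V P n I \<longrightarrow> I = {0} \<or> I = V)"

definition irreducible :: "('k::field \<Rightarrow> 'v::ab_group_add \<Rightarrow> 'v) \<Rightarrow> 'v set \<Rightarrow> ('v \<Rightarrow> 'v \<Rightarrow> 'k)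
    \<Rightarrow> ('v list \<Rightarrow> 'v) \<Rightarrow> nat \<Rightarrow> bool" where
  "irreducible scale V B P n \<longleftrightarrow>
     \<not> (\<exists>I J. ideal scale V P n I \<and> ideal scale V P n J \<and> I \<noteq> {0} \<and> J \<noteq> {0} \<and>
             I \<inter> J = {0} \<and> {x + y | x y. x \<in> I \<and> y \<in> J} = V \<and>
             nondeg_on B I \<and> nondeg_on B J)"

definition maximal_nontrivial_ideal :: "('k::field \<Rightarrow> 'v::ab_group_add \<Rightarrow> 'v) \<Rightarrow> 'v set
    \<Rightarrow> ('v list \<Rightarrow> 'v) \<Rightarrow> nat \<Rightarrow> 'v set \<Rightarrow> bool" where
  "maximal_nontrivial_ideal scale V P n I \<longleftrightarrow>
     ideal scale V P n I \<and> I \<noteq> {0} \<and> I \<noteq> V \<and>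
     (\<forall>J. ideal scale V P n J \<and> I \<subseteq> J \<longrightarrow> J = I \<or> J = V)"

text \<open>Skew-symmetric n-linear forms on G (these correspond to elements phi of S^n g,
  g purely odd, via the non-degenerate form).\<close>

definition skew_form :: "('k::field \<Rightarrow> 'v::ab_group_add \<Rightarrow> 'v) \<Rightarrow> 'v set \<Rightarrow> nat
    \<Rightarrow> ('v list \<Rightarrow> 'k) \<Rightarrow> bool" where
  "skew_form scale G n \<Phi> \<longleftrightarrow>
     (\<forall>as i x y c. set as \<subseteq> G \<and> length as = n \<and> i < n \<and> x \<in> G \<and> y \<in> G \<longrightarrow>
        \<Phi> (as[i := x + y]) = \<Phi> (as[i := x]) + \<Phi> (as[i := y]) \<and>
        \<Phi> (as[i := scale c x]) = c * \<Phi> (as[i := x])) \<and>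
     (\<forall>as i. set as \<subseteq> G \<and> length as = n \<and> Suc i < n \<longrightarrow>
        \<Phi> (as[i := as ! Suc i, Suc i := as ! i]) = - \<Phi> as)"

text \<open>The double extension d = g + h + h^* with h = K x one-dimensional (odd), h^* = K alpha,
  (x, alpha) = 1; an element (u, s, t) stands for u + s x + t alpha.\<close>

definition dscale :: "('k::field \<Rightarrow> 'v \<Rightarrow> 'v) \<Rightarrow> 'k \<Rightarrow> 'v \<times> 'k \<times> 'k \<Rightarrow> 'v \<times> 'k \<times> 'k" where
  "dscale scale c a = (scale c (fst a), c * fst (snd a), c * snd (snd a))"

definition dform :: "('v \<Rightarrow> 'v \<Rightarrow> 'k::field) \<Rightarrow> 'v \<times> 'k \<times> 'k \<Rightarrow> 'v \<times> 'k \<times> 'k \<Rightarrow> 'k" where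
  "dform Bg a b = Bg (fst a) (fst b) + fst (snd a) * snd (snd b) + snd (snd a) * fst (snd b)"

definition del_nth :: "nat \<Rightarrow> 'a list \<Rightarrow> 'a list" where
  "del_nth i xs = take i xs @ drop (Suc i) xs"

text \<open>The (n+1)-form (a0, {a1,...,an}) associated with the derived potential mu + alpha phi,
  mu the derived potential of g: the g-part plus the contraction of alpha phi, where
  (a_i, alpha) is the x-coordinate of a_i.\<close>

definition dext_omega :: "('v \<Rightarrow> 'v \<Rightarrow> 'k::field) \<Rightarrow> ('v list \<Rightarrow> 'v) \<Rightarrow> ('v list \<Rightarrow> 'k)
    \<Rightarrow> nat \<Rightarrow> ('v \<times> 'k \<times> 'k) list \<Rightarrow> 'k" where
  "dext_omega Bg Pg \<Phi> n as =
     Bg (fst (hd as)) (Pg (map fst (tl as))) +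
     (\<Sum>i<Suc n. (-1) ^ i * fst (snd (as ! i)) * \<Phi> (map fst (del_nth i as)))"

definition iso_to_double_ext_psi1 :: "('k::field \<Rightarrow> 'v::ab_group_add \<Rightarrow> 'v) \<Rightarrow> ('v \<Rightarrow> 'v \<Rightarrow> 'k)
    \<Rightarrow> ('v list \<Rightarrow> 'v) \<Rightarrow> nat \<Rightarrow> bool" where
  "iso_to_double_ext_psi1 scale B P n \<longleftrightarrow>
     (\<exists>G Bg Pg \<Phi> Pd f.
        ssia scale G Bg Pg n \<and> skew_form scale G n \<Phi> \<and>
        (\<forall>as. set as \<subseteq> G \<times> UNIV \<and> length as = n \<longrightarrow> Pd as \<in> G \<times> UNIV) \<and>
        (\<forall>a0 as. a0 \<in> G \<times> UNIV \<and> set as \<subseteq> G \<times> UNIV \<and> length as = n \<longrightarrow>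
           dform Bg a0 (Pd as) = dext_omega Bg Pg \<Phi> n (a0 # as)) \<and>
        bij_betw f UNIV (G \<times> UNIV) \<and>
        (\<forall>x y. f (x + y) = f x + f y) \<and>
        (\<forall>c x. f (scale c x) = dscale scale c (f x)) \<and>
        (\<forall>x y. dform Bg (f x) (f y) = B x y) \<and>
        (\<forall>as. length as = n \<longrightarrow> f (P as) = Pd (map f as)))"

end

theory Submission
  imports Defs
begin

definition mlin :: "('k::field \<Rightarrow> 'v::ab_group_add \<Rightarrow> 'v) \<Rightarrow> nat \<Rightarrow> ('v list \<Rightarrow> 'k) \<Rightarrow> bool" where
  "mlin sc m F \<longleftrightarrow> (\<forall>cs i a b c. length cs = m \<longrightarrow> i < m \<longrightarrow>
     F (cs[i := a + b]) = F (cs[i := a]) + F (cs[i := b]) \<and> F (cs[i := sc c a]) = c * F (cs[i := a]))"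

lemma mlin_cons:
  fixes sc :: "'k::field \<Rightarrow> 'v::ab_group_add \<Rightarrow> 'v" and F :: "'v list \<Rightarrow> 'k"
  shows "mlin sc (Suc m) F \<Longrightarrow> mlin sc m (\<lambda>cs. F (c # cs))"
  unfolding mlin_def
proof (intro allI impI)
  fix cs :: "'v list" and i :: nat and a b :: 'v and d :: 'k
  assume A: "\<forall>cs i a b c. length cs = Suc m \<longrightarrow> i < Suc m \<longrightarrow>
     F (cs[i := a + b]) = F (cs[i := a]) + F (cs[i := b]) \<and> F (cs[i := sc c a]) = c * F (cs[i := a])"
    and l: "length cs = m" and i: "i < m"
  from A[rule_format, of "c # cs" "Suc i" a b d] l i
  show "F (c # cs[i := a + b]) = F (c # cs[i := a]) + F (c # cs[i := b]) \<and>
        F (c # cs[i := sc d a]) = d * F (c # cs[i := a])" by simp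
qed

lemma mlin_0:
  fixes sc :: "'k::field \<Rightarrow> 'v::ab_group_add \<Rightarrow> 'v" and F :: "'v list \<Rightarrow> 'k"
  assumes "mlin sc (Suc m) F" "length r = m"
  shows "F ((a + b) # r) = F (a # r) + F (b # r)" "F (sc d a # r) = d * F (a # r)"
  using assms(1)[unfolded mlin_def, rule_format, of "a # r" 0 a b d] assms(2) by simp_all

lemma K_lemma:
  fixes sc :: "'k::field \<Rightarrow> 'v::ab_group_add \<Rightarrow> 'v" and F :: "'v list \<Rightarrow> 'k"
  shows "mlin sc (length us) F \<Longrightarrow> (\<forall>cs i. length cs = length us \<longrightarrow> i < length us \<longrightarrow> F (cs[i := e]) = 0)
   \<Longrightarrow> F (map (\<lambda>(c, t). c + sc t e) us) = F (map fst us)"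
proof (induction us arbitrary: F)
  case Nil
  then show ?case by simp
next
  case (Cons ct us)
  obtain c t where ct: "ct = (c, t)" by force
  let ?r = "map (\<lambda>(c, t). c + sc t e) us"
  have lr: "length ?r = length us" by simp
  have "F ((c + sc t e) # ?r) = F (c # ?r) + t * F (e # ?r)"
    using mlin_0[OF Cons.prems(1)[simplified] lr] by simp
  also have "F (e # ?r) = 0" using Cons.prems(2)[rule_format, of "c # ?r" 0] by simp
  also have "F (c # ?r) = F (c # map fst us)"
  proof -
    have "mlin sc (length us) (\<lambda>cs. F (c # cs))" using mlin_cons Cons.prems(1) by simp
    moreover have "\<forall>cs i. length cs = length us \<longrightarrow> i < length us \<longrightarrow> F (c # cs[i := e]) = 0"
    proof (intro allI impI)
      fix cs :: "'v list" and i :: nat assume "length cs = length us" "i < length us"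
      thus "F (c # cs[i := e]) = 0"
        using Cons.prems(2)[rule_format, of "c # cs" "Suc i"] by simp
    qed
    ultimately show ?thesis using Cons.IH[of "\<lambda>cs. F (c # cs)"] by simp
  qed
  finally show ?case using ct by simp
qed

lemma E_lemma:
  fixes sc :: "'k::field \<Rightarrow> 'v::ab_group_add \<Rightarrow> 'v" and F :: "'v list \<Rightarrow> 'k"
  shows "mlin sc (length us) F \<Longrightarrow>
   (\<forall>cs i j. length cs = length us \<longrightarrow> i < length us \<longrightarrow> j < length us \<longrightarrow> i \<noteq> j \<longrightarrow> F (cs[i := x, j := x]) = 0)
   \<Longrightarrow> F (map (\<lambda>(u, s). u + sc s x) us) =
       F (map fst us) + (\<Sum>i<length us. snd (us ! i) * F ((map fst us)[i := x]))"
proof (induction us arbitrary: F)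
  case Nil
  then show ?case by simp
next
  case (Cons us0 us)
  obtain u s where us0: "us0 = (u, s)" by force
  let ?r = "map (\<lambda>(u, s). u + sc s x) us"
  let ?ul = "map fst us"
  have lr: "length ?r = length us" by simp
  have ml: "mlin sc (Suc (length us)) F" using Cons.prems(1) by simp
  have "F ((u + sc s x) # ?r) = F (u # ?r) + s * F (x # ?r)"
    using mlin_0[OF ml lr] by simp
  also have "F (u # ?r) = F (u # ?ul) + (\<Sum>i<length us. snd (us ! i) * F (u # ?ul[i := x]))"
  proof -
    have "mlin sc (length us) (\<lambda>cs. F (u # cs))" using mlin_cons ml by blast
    moreover have "\<forall>cs i j. length cs = length us \<longrightarrow> i < length us \<longrightarrow> j < length us \<longrightarrow> i \<noteq> j \<longrightarrow> F (u # cs[i := x, j := x]) = 0"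
    proof (intro allI impI)
      fix cs :: "'v list" and i j :: nat assume "length cs = length us" "i < length us" "j < length us" "i \<noteq> j"
      thus "F (u # cs[i := x, j := x]) = 0"
        using Cons.prems(2)[rule_format, of "u # cs" "Suc i" "Suc j"] by simp
    qed
    ultimately show ?thesis using Cons.IH[of "\<lambda>cs. F (u # cs)"] by simp
  qed
  also have "F (x # ?r) = F (x # ?ul)"
  proof -
    have "mlin sc (length us) (\<lambda>cs. F (x # cs))" using mlin_cons ml by blast
    moreover have "\<forall>cs i j. length cs = length us \<longrightarrow> i < length us \<longrightarrow> j < length us \<longrightarrow> i \<noteq> j \<longrightarrow> F (x # cs[i := x, j := x]) = 0"
    proof (intro allI impI)
      fix cs :: "'v list" and i j :: nat assume "length cs = length us" "i < length us" "j < length us" "i \<noteq> j"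
      thus "F (x # cs[i := x, j := x]) = 0"
        using Cons.prems(2)[rule_format, of "x # cs" "Suc i" "Suc j"] by simp
    qed
    moreover have "\<forall>i<length us. F (x # ?ul[i := x]) = 0"
    proof (intro allI impI)
      fix i :: nat assume "i < length us"
      thus "F (x # ?ul[i := x]) = 0"
        using Cons.prems(2)[rule_format, of "x # ?ul" 0 "Suc i"] by simp
    qed
    ultimately show ?thesis using Cons.IH[of "\<lambda>cs. F (x # cs)"] by simp
  qed
  finally have "F (map (\<lambda>(u, s). u + sc s x) (us0 # us)) =
      F (u # ?ul) + s * F (x # ?ul) + (\<Sum>i<length us. snd (us ! i) * F (u # ?ul[i := x]))"
    using us0 by (simp add: algebra_simps)
  moreover have "(\<Sum>i<length (us0 # us). snd ((us0 # us) ! i) * F ((map fst (us0 # us))[i := x]))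
     = s * F (x # ?ul) + (\<Sum>i<length us. snd (us ! i) * F (u # ?ul[i := x]))"
    unfolding length_Cons sum.lessThan_Suc_shift using us0 by simp
  ultimately show ?case using us0 by (simp add: algebra_simps)
qed

locale dx = vector_space scale
  for scale :: "'k::field_char_0 \<Rightarrow> 'v::ab_group_add \<Rightarrow> 'v" +
  fixes B :: "'v \<Rightarrow> 'v \<Rightarrow> 'k" and P :: "'v list \<Rightarrow> 'v" and n :: nat and I :: "'v set"
  assumes ss: "ssia scale UNIV B P n"
    and irr: "irreducible scale UNIV B P n"
    and mx: "maximal_nontrivial_ideal scale UNIV P n I"
    and dimI: "dim (UNIV :: 'v set) = dim I + 1"
    and n2: "2 \<le> n"
begin

lemma B_lin_all: "\<forall>x\<in>UNIV. \<forall>y\<in>UNIV. \<forall>z\<in>UNIV. \<forall>c. B (x + y) z = B x z + B y z \<and> B (scale c x) z = c * B x z"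
  using ss unfolding ssia_def by (elim conjE) assumption
lemma B_sym_all: "\<forall>x\<in>UNIV. \<forall>y\<in>UNIV. B x y = B y x"
  using ss unfolding ssia_def by (elim conjE) assumption
lemma B_add1: "B (x + y) z = B x z + B y z" and B_scale1: "B (scale c x) z = c * B x z"
  using B_lin_all by simp_all

lemma B_sym: "B x y = B y x" using B_sym_all by simp

lemma B_add2: "B z (x + y) = B z x + B z y" and B_scale2: "B z (scale c x) = c * B z x"
  using B_add1 B_scale1 B_sym by metis+

lemma B_zero1[simp]: "B 0 z = 0"
  using B_add1[of 0 0 z] by simp
lemma B_zero2[simp]: "B z 0 = 0" using B_zero1 B_sym by metis
lemma B_neg1: "B (- x) z = - B x z"
proof -
  have "B x z + B (-x) z = 0" using B_add1[of x "-x" z] by simp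
  thus ?thesis by (simp add: add_eq_0_iff)
qed
lemma B_neg2: "B z (- x) = - B z x" using B_neg1 B_sym by metis
lemma B_diff1: "B (x - y) z = B x z - B y z"
  using B_add1[of x "-y" z] B_neg1 by simp
lemma B_diff2: "B z (x - y) = B z x - B z y" using B_diff1 B_sym by metis

lemmas Bsimps = B_add1 B_scale1 B_add2 B_scale2 B_neg1 B_neg2 B_diff1 B_diff2

lemma nondeg_all: "nondeg_on B UNIV"
  using ss unfolding ssia_def by (elim conjE) assumption
lemma nondeg: "(\<And>y. B x y = 0) \<Longrightarrow> x = 0"
  using nondeg_all unfolding nondeg_on_def by simp

lemma P_lin_all: "\<forall>as i x y c. set as \<subseteq> UNIV \<and> length as = n \<and> i < n \<and> x \<in> UNIV \<and> y \<in> UNIV \<longrightarrow>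
        P (as[i := x + y]) = P (as[i := x]) + P (as[i := y]) \<and>
        P (as[i := scale c x]) = scale c (P (as[i := x]))"
  using ss unfolding ssia_def by (elim conjE) assumption

lemma P_skew_all: "\<forall>as i. set as \<subseteq> UNIV \<and> length as = n \<and> Suc i < n \<longrightarrow>
        P (as[i := as ! Suc i, Suc i := as ! i]) = - P as"
  using ss unfolding ssia_def by (elim conjE) assumption

lemma P_inv_all: "\<forall>a0 a1 as. a0 \<in> UNIV \<and> a1 \<in> UNIV \<and> set as \<subseteq> UNIV \<and> length as = n - 1 \<longrightarrow>
        B a0 (P (a1 # as)) = - B a1 (P (a0 # as))"
  using ss unfolding ssia_def by (elim conjE) assumption

lemma P_add: "length as = n \<Longrightarrow> i < n \<Longrightarrow> P (as[i := x + y]) = P (as[i := x]) + P (as[i := y])"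
  using P_lin_all by simp
lemma P_scale: "length as = n \<Longrightarrow> i < n \<Longrightarrow> P (as[i := scale c x]) = scale c (P (as[i := x]))"
  using P_lin_all by simp
lemma P_skew: "length as = n \<Longrightarrow> Suc i < n \<Longrightarrow> P (as[i := as ! Suc i, Suc i := as ! i]) = - P as"
  by (rule P_skew_all[rule_format]) simp
lemma P_inv: "length as = n - 1 \<Longrightarrow> B a0 (P (a1 # as)) = - B a1 (P (a0 # as))"
  by (rule P_inv_all[rule_format]) simp

lemma I_ideal_all: "ideal scale UNIV P n I"
  using mx unfolding maximal_nontrivial_ideal_def by (elim conjE) assumption
lemma I_ne: "I \<noteq> UNIV"
  using mx unfolding maximal_nontrivial_ideal_def by (elim conjE) assumption
lemma I_nz: "I \<noteq> {0}"
  using mx unfolding maximal_nontrivial_ideal_def by (elim conjE) assumption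
lemma I_sub: "subspace I"
  using I_ideal_all unfolding ideal_def by (elim conjE) assumption
lemma I_ideal: "length as = n - 1 \<Longrightarrow> y \<in> I \<Longrightarrow> P (as @ [y]) \<in> I"
  using I_ideal_all unfolding ideal_def by simp

lemma self_neg_zero: "(v::'v) = - v \<Longrightarrow> v = 0"
proof -
  assume a: "v = - v"
  from a have "v + v = 0" by (simp only: eq_neg_iff_add_eq_0)
  hence "scale (1 + 1) v = 0" using scale_left_distrib[of 1 1 v] by simp
  hence "scale (1 / (1 + 1)) (scale (1 + 1) v) = 0" by simp
  thus "v = 0" by simp
qed

lemma swap: "length (t @ a # b # d) = n \<Longrightarrow> P (t @ b # a # d) = - P (t @ a # b # d)"
proof -
  assume l: "length (t @ a # b # d) = n"
  have "P ((t @ a # b # d)[length t := (t @ a # b # d) ! Suc (length t),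
          Suc (length t) := (t @ a # b # d) ! length t]) = - P (t @ a # b # d)"
    by (rule P_skew) (use l in auto)
  moreover have "(t @ a # b # d)[length t := (t @ a # b # d) ! Suc (length t),
          Suc (length t) := (t @ a # b # d) ! length t] = t @ b # a # d"
    by (simp add: list_update_append nth_append)
  ultimately show ?thesis by simp
qed

lemma move: "length (t @ y # d) = n \<Longrightarrow> P (t @ y # d) = scale ((-1) ^ length t) (P (y # t @ d))"
proof (induction t arbitrary: d rule: rev_induct)
  case Nil
  then show ?case by simp
next
  case (snoc a t)
  have "P (t @ a # y # d) = - P (t @ y # a # d)"
    using swap[of t y a d] snoc.prems by simp
  also have "P (t @ y # a # d) = scale ((-1) ^ length t) (P (y # t @ a # d))"
    using snoc.IH[of "a # d"] snoc.prems by simp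
  finally show ?case by simp
qed


lemma move_back: "length (t @ y # d) = n \<Longrightarrow> P (y # t @ d) = scale ((-1) ^ length t) (P (t @ y # d))"
proof -
  assume l: "length (t @ y # d) = n"
  have "scale ((-1) ^ length t) (P (t @ y # d)) = scale ((-1) ^ length t * (-1) ^ length t) (P (y # t @ d))"
    using move[OF l] by simp
  also have "(-1::'k) ^ length t * (-1) ^ length t = 1"
    by (simp add: power_mult_distrib[symmetric])
  finally show ?thesis by simp
qed

lemma P_upd: "length r = n \<Longrightarrow> j < n \<Longrightarrow> P (r[j := y]) = scale ((-1) ^ j) (P (y # del_nth j r))"
proof -
  assume l: "length r = n" and j: "j < n"
  have e: "r[j := y] = take j r @ y # drop (Suc j) r" using l j by (simp add: upd_conv_take_nth_drop)
  have m: "P (take j r @ y # drop (Suc j) r) = scale ((-1) ^ length (take j r)) (P (y # take j r @ drop (Suc j) r))"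
    by (rule move) (use l j in simp)
  have lt: "length (take j r) = j" using l j by simp
  show ?thesis unfolding del_nth_def e using m[unfolded lt] .
qed

lemma P_I: "length r = n - 1 \<Longrightarrow> y \<in> I \<Longrightarrow> P (y # r) \<in> I"
proof -
  assume l: "length r = n - 1" and y: "y \<in> I"
  have "P (y # r @ []) = scale ((-1) ^ length r) (P (r @ [y]))"
    by (rule move_back) (use l n2 in auto)
  moreover have "P (r @ [y]) \<in> I" using I_ideal l y by blast
  ultimately show ?thesis using I_sub subspace_scale by auto
qed

lemma P_double: "P (y # y # r) = 0" if "length r = n - 2"
proof -
  have "P ([] @ y # y # r) = - P ([] @ y # y # r)" by (rule swap) (use that n2 in auto)
  thus ?thesis by (intro self_neg_zero) simp
qed

lemma del_nth_Suc[simp]: "del_nth (Suc k) (y # r) = y # del_nth k r"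
  by (simp add: del_nth_def)
lemma del_nth_0[simp]: "del_nth 0 (y # r) = r"
  by (simp add: del_nth_def)
lemma length_del_nth[simp]: "k < length r \<Longrightarrow> length (del_nth k r) = length r - 1"
  by (simp add: del_nth_def)

lemma P_rep: "length r = n - 1 \<Longrightarrow> k < n - 1 \<Longrightarrow> r ! k = y \<Longrightarrow> P (y # r) = 0"
proof -
  assume l: "length r = n - 1" and k: "k < n - 1" and y: "r ! k = y"
  have "P (y # r) = P ((y # r)[Suc k := y])" using list_update_id[of r k] y by simp
  also have "\<dots> = scale ((-1) ^ Suc k) (P (y # del_nth (Suc k) (y # r)))"
    by (rule P_upd) (use l k n2 in simp_all)
  also have "P (y # del_nth (Suc k) (y # r)) = 0"
    using P_double[of "del_nth k r" y] l k by simp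
  finally show ?thesis by simp
qed


lemma scal_neg_zero: "(a::'k) = - a \<Longrightarrow> a = 0"
  by simp

definition omega :: "'v list \<Rightarrow> 'k" where "omega cs = B (hd cs) (P (tl cs))"

lemma omega_Cons[simp]: "omega (c # r) = B c (P r)" by (simp add: omega_def)

lemma omega_mlin: "mlin scale (Suc n) omega"
  unfolding mlin_def
proof (intro allI impI)
  fix cs :: "'v list" and i :: nat and a b :: 'v and c :: 'k
  assume l: "length cs = Suc n" and i: "i < Suc n"
  obtain c0 r where cs: "cs = c0 # r" using l by (cases cs) auto
  have lr: "length r = n" using l cs by simp
  show "omega (cs[i := a + b]) = omega (cs[i := a]) + omega (cs[i := b]) \<and>
        omega (cs[i := scale c a]) = c * omega (cs[i := a])"
  proof (cases i)
    case 0
    then show ?thesis using cs by (simp add: B_add1 B_scale1)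
  next
    case (Suc j)
    have j: "j < n" using i Suc by simp
    show ?thesis using cs Suc P_add[OF lr j] P_scale[OF lr j] by (simp add: B_add2 B_scale2)
  qed
qed

lemma omega_e:
  assumes Z: "\<And>ws. length ws = n \<Longrightarrow> B e (P ws) = 0"
    and l: "length cs = Suc n" and i: "i < Suc n"
  shows "omega (cs[i := e]) = 0"
proof -
  obtain c0 r where cs: "cs = c0 # r" using l by (cases cs) auto
  have lr: "length r = n" using l cs by simp
  show ?thesis
  proof (cases i)
    case 0
    then show ?thesis using cs Z lr by simp
  next
    case (Suc j)
    have j: "j < n" using i Suc by simp
    have ld: "length (del_nth j r) = n - 1" using lr j by simp
    have "omega (cs[i := e]) = B c0 (P (r[j := e]))" using cs Suc by simp
    also have "\<dots> = (-1) ^ j * B c0 (P (e # del_nth j r))" using P_upd[OF lr j] by (simp add: B_scale2)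
    also have "B c0 (P (e # del_nth j r)) = - B e (P (c0 # del_nth j r))" using P_inv[OF ld] .
    also have "B e (P (c0 # del_nth j r)) = 0" using Z ld j by simp
    finally show ?thesis by simp
  qed
qed

lemma omega_x0: "length r = n - 1 \<Longrightarrow> B x (P (x # r)) = 0"
  using P_inv[of r x x] by (intro scal_neg_zero) simp

lemma omega_xx:
  assumes l: "length cs = Suc n" and i: "i < Suc n" and j: "j < Suc n" and ij: "i \<noteq> j"
  shows "omega (cs[i := x, j := x]) = 0"
proof -
  obtain c0 r where cs: "cs = c0 # r" using l by (cases cs) auto
  have lr: "length r = n" using l cs by simp
  have one: "B x (P (r[k := x])) = 0" if k: "k < n" for k
  proof -
    have ld: "length (del_nth k r) = n - 1" using lr k by simp
    show ?thesis using P_upd[OF lr k, of x] omega_x0[OF ld] by (simp add: B_scale2)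
  qed
  show ?thesis
  proof (cases i)
    case 0
    then obtain j' where j': "j = Suc j'" using ij by (cases j) auto
    then show ?thesis using cs 0 one[of j'] j by simp
  next
    case (Suc i')
    show ?thesis
    proof (cases j)
      case 0
      then show ?thesis using cs Suc one[of i'] i by simp
    next
      case (Suc j')
      have i': "i' < n" and j'': "j' < n" and ij': "i' \<noteq> j'" using i j ij \<open>i = Suc i'\<close> Suc by auto
      let ?r1 = "r[i' := x]"
      have lr1: "length ?r1 = n" using lr by simp
      have "P (?r1[j' := x]) = scale ((-1) ^ j') (P (x # del_nth j' ?r1))" using P_upd[OF lr1 j''] .
      also have "P (x # del_nth j' ?r1) = 0"
      proof (rule P_rep)
        show "length (del_nth j' ?r1) = n - 1" using lr1 j'' by simp
        show "(if i' < j' then i' else i' - 1) < n - 1" using i' j'' ij' by auto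
        show "del_nth j' ?r1 ! (if i' < j' then i' else i' - 1) = x"
          using i' j'' ij' lr by (auto simp: del_nth_def nth_append min_def)
      qed
      finally show ?thesis using cs \<open>i = Suc i'\<close> Suc by simp
    qed
  qed
qed

lemma omega_x:
  assumes l: "length cs = Suc n" and i: "i < Suc n"
  shows "omega (cs[i := x]) = (-1) ^ i * B x (P (del_nth i cs))"
proof -
  obtain c0 r where cs: "cs = c0 # r" using l by (cases cs) auto
  have lr: "length r = n" using l cs by simp
  show ?thesis
  proof (cases i)
    case 0
    then show ?thesis using cs by simp
  next
    case (Suc j)
    have j: "j < n" using i Suc by simp
    have ld: "length (del_nth j r) = n - 1" using lr j by simp
    have "omega (cs[i := x]) = B c0 (P (r[j := x]))" using cs Suc by simp
    also have "\<dots> = (-1) ^ j * B c0 (P (x # del_nth j r))" using P_upd[OF lr j] by (simp add: B_scale2)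
    also have "B c0 (P (x # del_nth j r)) = - B x (P (c0 # del_nth j r))" using P_inv[OF ld] .
    finally show ?thesis using cs Suc by simp
  qed
qed


lemma expand:
  assumes Z: "\<And>ws. length ws = n \<Longrightarrow> B e (P ws) = 0"
    and lL: "length (L :: ('v \<times> 'k \<times> 'k) list) = Suc n"
  shows "omega (map (\<lambda>(u, s, t). u + scale s x + scale t e) L) =
    omega (map fst L) + (\<Sum>i<Suc n. fst (snd (L ! i)) * ((-1) ^ i * B x (P (del_nth i (map fst L)))))"
proof -
  let ?us = "map (\<lambda>(u, s, t). (u + scale s x, t)) L"
  let ?us2 = "map (\<lambda>(u, s, t). (u, s)) L"
  have m1: "map (\<lambda>(u, s, t). u + scale s x + scale t e) L = map (\<lambda>(c, t). c + scale t e) ?us"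
    by (simp add: case_prod_beta)
  have "omega (map (\<lambda>(c, t). c + scale t e) ?us) = omega (map fst ?us)"
  proof (rule K_lemma)
    show "mlin scale (length ?us) omega" using omega_mlin lL by simp
    show "\<forall>cs i. length cs = length ?us \<longrightarrow> i < length ?us \<longrightarrow> omega (cs[i := e]) = 0"
      using omega_e[OF Z] lL by simp
  qed
  also have "map fst ?us = map (\<lambda>(u, s). u + scale s x) ?us2"
    by (simp add: case_prod_beta)
  also have "omega (map (\<lambda>(u, s). u + scale s x) ?us2) =
      omega (map fst ?us2) + (\<Sum>i<length ?us2. snd (?us2 ! i) * omega ((map fst ?us2)[i := x]))"
  proof (rule E_lemma)
    show "mlin scale (length ?us2) omega" using omega_mlin lL by simp
    show "\<forall>cs i j. length cs = length ?us2 \<longrightarrow> i < length ?us2 \<longrightarrow> j < length ?us2 \<longrightarrow> i \<noteq> j \<longrightarrow>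
        omega (cs[i := x, j := x]) = 0"
      using omega_xx lL by simp
  qed
  also have "map fst ?us2 = map fst L" by (simp add: case_prod_beta)
  also have "(\<Sum>i<length ?us2. snd (?us2 ! i) * omega ((map fst L)[i := x])) =
      (\<Sum>i<Suc n. fst (snd (L ! i)) * ((-1) ^ i * B x (P (del_nth i (map fst L)))))"
    using lL by (intro sum.cong) (auto simp: case_prod_beta omega_x)
  finally show ?thesis unfolding m1 .
qed


lemma fin_basis: obtains Bs where "finite Bs" "independent Bs" "span Bs = UNIV"
proof -
  have "fin_dim scale (UNIV :: 'v set)" using ss unfolding ssia_def by (elim conjE) assumption
  then obtain S where S: "finite S" "span S = UNIV" unfolding fin_dim_def by blast
  obtain Bs where Bs: "Bs \<subseteq> S" "independent Bs" "S \<subseteq> span Bs"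
    using maximal_independent_subset[of S] by blast
  have "finite Bs" using Bs(1) S(1) finite_subset by blast
  moreover have "span Bs = UNIV"
    using span_mono[OF Bs(3)] S(2) span_span[of Bs] by auto
  ultimately show ?thesis using that Bs(2) by blast
qed

lemma span_I: "span I = I" using I_sub by simp

lemma D1: "w \<notin> I \<Longrightarrow> span (insert w I) = UNIV"
proof -
  assume w: "w \<notin> I"
  obtain Bs where Bs: "finite Bs" "independent Bs" "span Bs = UNIV" using fin_basis by blast
  interpret fd: finite_dimensional_vector_space scale Bs
    by unfold_locales (use Bs in auto)
  have "dim (insert w I) = dim I + 1" using fd.dim_insert[of w I] w span_I by simp
  also have "\<dots> = fd.dimension" using dimI fd.dim_UNIV unfolding fd.dimension_def by simp
  finally have "dim (insert w I) = fd.dimension" .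
  thus ?thesis by (simp only: fd.dim_eq_full)
qed

lemma B_span_zero: "(\<And>b. b \<in> S \<Longrightarrow> B v b = 0) \<Longrightarrow> y \<in> span S \<Longrightarrow> B v y = 0"
proof -
  assume h: "\<And>b. b \<in> S \<Longrightarrow> B v b = 0" and y: "y \<in> span S"
  have "subspace {y. B v y = 0}"
    by (rule subspaceI) (auto simp: B_add2 B_scale2)
  hence "span S \<subseteq> {y. B v y = 0}" using h by (intro span_minimal) auto
  thus ?thesis using y by auto
qed

lemma D2: obtains e where "e \<noteq> 0" "\<And>y. y \<in> I \<Longrightarrow> B y e = 0"
proof -
  obtain Bs where Bs: "finite Bs" "independent Bs" "span Bs = UNIV" using fin_basis by blast
  interpret fd: finite_dimensional_vector_space scale Bs
    by unfold_locales (use Bs in auto)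
  obtain S where S: "S \<subseteq> I" "independent S" "I \<subseteq> span S" "card S = dim I" by (rule basis_exists)
  have fS: "finite S" using fd.finiteI_independent[OF S(2)] .
  define Q where "Q v = (\<Sum>b\<in>S. scale (B v b) b)" for v
  have lin: "Vector_Spaces.linear scale scale Q"
    unfolding Vector_Spaces.linear_iff
  proof (intro conjI allI)
    show "vector_space scale" by unfold_locales
    show "vector_space scale" by unfold_locales
    show "Q (x + y) = Q x + Q y" for x y
      unfolding Q_def by (simp add: B_add1 scale_left_distrib sum.distrib)
    show "Q (scale c x) = scale c (Q x)" for c x
      unfolding Q_def by (simp add: B_scale1 scale_sum_right)
  qed
  have QI: "Q v \<in> I" for v
  proof -
    have "Q v \<in> span S" unfolding Q_def by (intro span_sum span_scale span_base)
    thus ?thesis using span_mono[OF S(1)] span_I by auto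
  qed
  have "\<not> inj Q"
  proof
    assume "inj Q"
    hence "surj Q" using fd.linear_inj_imp_surj[OF lin] by simp
    hence "I = UNIV" using QI by (metis UNIV_eq_I surjD)
    thus False using I_ne by simp
  qed
  then obtain v1 v2 where v: "v1 \<noteq> v2" "Q v1 = Q v2" unfolding inj_def by blast
  define e where "e = v1 - v2"
  have Qe: "Q e = 0"
    unfolding e_def Q_def using v(2) unfolding Q_def
    by (simp add: B_diff1 scale_left_diff_distrib sum_subtractf)
  have eb: "B e b = 0" if b: "b \<in> S" for b
  proof (rule ccontr)
    assume "B e b \<noteq> 0"
    hence "dependent S" using Qe b unfolding Q_def dependent_finite[OF fS] by blast
    thus False using S(2) by simp
  qed
  have "B e y = 0" if "y \<in> I" for y
    using B_span_zero[of S e y] eb S(3) that by auto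
  moreover have "e \<noteq> 0" using v(1) unfolding e_def by simp
  ultimately show ?thesis using that B_sym by metis
qed


lemma del_nth_map: "map f (del_nth i L) = del_nth i (map f L)"
  by (simp add: del_nth_def take_map drop_map)

context
  fixes e x :: 'v
  assumes eI: "\<And>y. y \<in> I \<Longrightarrow> B y e = 0"
    and xe: "B x e = 1" and xx: "B x x = 0" and ee: "B e e = 0"
    and Z: "\<And>ws. length ws = n \<Longrightarrow> B e (P ws) = 0"
begin

lemma ex: "B e x = 1" using xe B_sym by metis

definition pr :: "'v \<Rightarrow> 'v" where "pr v = v - scale (B v e) x - scale (B v x) e"

definition GG :: "'v set" where "GG = {v. B v x = 0 \<and> B v e = 0}"

lemma B_pr2: "B u (pr v) = B u v - B v e * B u x - B v x * B u e"
  unfolding pr_def by (simp add: B_diff2 B_scale2)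

lemma pr_G: "pr v \<in> GG"
  unfolding GG_def pr_def by (simp add: B_diff1 B_scale1 xx xe ex ee)

lemma pr_id: "u \<in> GG \<Longrightarrow> pr u = u"
  unfolding GG_def pr_def by simp

lemma pr_add: "pr (v + w) = pr v + pr w"
  unfolding pr_def by (simp add: B_add1 scale_left_distrib algebra_simps)

lemma pr_scale: "pr (scale c v) = scale c (pr v)"
  unfolding pr_def by (simp add: B_scale1 scale_right_diff_distrib)

lemma pr_neg: "pr (- v) = - pr v"
  using pr_scale[of "-1" v] by simp

lemma B_G_pr: "u \<in> GG \<Longrightarrow> B u (pr v) = B u v"
  unfolding GG_def using B_pr2 by simp

definition ff :: "'v \<Rightarrow> 'v \<times> 'k \<times> 'k" where "ff v = (pr v, B v e, B v x)"

definition fi :: "'v \<times> 'k \<times> 'k \<Rightarrow> 'v" where "fi = (\<lambda>(u, s, t). u + scale s x + scale t e)"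

lemma fi_ff: "fi (ff v) = v"
  unfolding fi_def ff_def pr_def by simp

lemma ff_fi: "a \<in> GG \<times> UNIV \<Longrightarrow> ff (fi a) = a"
proof -
  assume a: "a \<in> GG \<times> UNIV"
  obtain u s t where a': "a = (u, s, t)" by (cases a) auto
  have u: "B u x = 0" "B u e = 0" using a a' unfolding GG_def by auto
  have 1: "B (fi a) e = s" unfolding a' fi_def using u by (simp add: B_add1 B_scale1 xe ee)
  have 2: "B (fi a) x = t" unfolding a' fi_def using u by (simp add: B_add1 B_scale1 xx ex)
  have 3: "pr (fi a) = u" unfolding pr_def 1 2 unfolding a' fi_def by simp
  show ?thesis using 1 2 3 unfolding ff_def a' by simp
qed

lemma ff_form: "dform B (ff v) (ff w) = B v w"
proof -
  have "B (pr v) (pr w) = B v (pr w)"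
  proof -
    have "B (pr w) x = 0" "B (pr w) e = 0" using pr_G[of w] unfolding GG_def by auto
    hence "B x (pr w) = 0" "B e (pr w) = 0" using B_sym by metis+
    thus ?thesis unfolding pr_def[of v] by (simp add: B_diff1 B_scale1)
  qed
  also have "\<dots> = B v w - B w e * B v x - B w x * B v e" by (rule B_pr2)
  finally show ?thesis unfolding dform_def ff_def by (simp add: algebra_simps)
qed

lemma G_sub: "subspace GG"
  by (rule subspaceI) (auto simp: GG_def B_add1 B_scale1)

lemma G_fin: "fin_dim scale GG"
proof -
  obtain Bs where Bs: "finite Bs" "independent Bs" "span Bs = UNIV" using fin_basis by blast
  have hom: "module_hom scale scale pr"
    unfolding module_hom_iff
    by (intro conjI allI pr_add pr_scale) unfold_locales
  have "span (pr ` Bs) = pr ` span Bs" using module_hom.span_image[OF hom] .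
  also have "\<dots> = GG"
  proof
    show "pr ` span Bs \<subseteq> GG" using pr_G by auto
    show "GG \<subseteq> pr ` span Bs"
    proof
      fix u assume "u \<in> GG"
      hence "u = pr u" using pr_id by simp
      moreover have "u \<in> span Bs" using Bs(3) by simp
      ultimately show "u \<in> pr ` span Bs" by (rule image_eqI)
    qed
  qed
  finally have sp: "span (pr ` Bs) = GG" .
  show ?thesis unfolding fin_dim_def
  proof (intro exI conjI)
    show "pr ` Bs \<subseteq> GG" using pr_G by auto
    show "finite (pr ` Bs)" using Bs(1) by simp
    show "span (pr ` Bs) = GG" by (rule sp)
  qed
qed

lemma G_ssia: "ssia scale GG B (\<lambda>ws. pr (P ws)) n"
  unfolding ssia_def
proof (intro conjI)
  show "subspace GG" by (rule G_sub)
  show "fin_dim scale GG" by (rule G_fin)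
  show "\<forall>x\<in>GG. \<forall>y\<in>GG. \<forall>z\<in>GG. \<forall>c. B (x + y) z = B x z + B y z \<and> B (scale c x) z = c * B x z"
    by (simp add: B_add1 B_scale1)
  show "\<forall>x\<in>GG. \<forall>y\<in>GG. B x y = B y x" using B_sym by blast
  show "nondeg_on B GG"
    unfolding nondeg_on_def
  proof (intro ballI impI)
    fix u assume u: "u \<in> GG" and h: "\<forall>y\<in>GG. B u y = 0"
    show "u = 0"
    proof (rule nondeg)
      fix v
      have "B u v = B u (pr v)" using B_G_pr[OF u] by simp
      thus "B u v = 0" using h pr_G by simp
    qed
  qed
  show "\<forall>as. set as \<subseteq> GG \<and> length as = n \<longrightarrow> pr (P as) \<in> GG" using pr_G by blast
  show "\<forall>as i xa y c. set as \<subseteq> GG \<and> length as = n \<and> i < n \<and> xa \<in> GG \<and> y \<in> GG \<longrightarrow>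
      pr (P (as[i := xa + y])) = pr (P (as[i := xa])) + pr (P (as[i := y])) \<and>
      pr (P (as[i := scale c xa])) = scale c (pr (P (as[i := xa])))"
    by (simp add: P_add P_scale pr_add pr_scale)
  show "\<forall>as i. set as \<subseteq> GG \<and> length as = n \<and> Suc i < n \<longrightarrow>
      pr (P (as[i := as ! Suc i, Suc i := as ! i])) = - pr (P as)"
  proof (intro allI impI)
    fix as :: "'v list" and i assume "set as \<subseteq> GG \<and> length as = n \<and> Suc i < n"
    thus "pr (P (as[i := as ! Suc i, Suc i := as ! i])) = - pr (P as)"
      using P_skew[of as i] pr_neg by simp
  qed
  show "\<forall>a0 a1 as. a0 \<in> GG \<and> a1 \<in> GG \<and> set as \<subseteq> GG \<and> length as = n - 1 \<longrightarrow>
      B a0 (pr (P (a1 # as))) = - B a1 (pr (P (a0 # as)))"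
  proof (intro allI impI)
    fix a0 a1 and as :: "'v list" assume h: "a0 \<in> GG \<and> a1 \<in> GG \<and> set as \<subseteq> GG \<and> length as = n - 1"
    have "B a0 (pr (P (a1 # as))) = B a0 (P (a1 # as))" using B_G_pr h by simp
    also have "\<dots> = - B a1 (P (a0 # as))" using P_inv[of as a0 a1] h by simp
    also have "B a1 (P (a0 # as)) = B a1 (pr (P (a0 # as)))" using B_G_pr h by simp
    finally show "B a0 (pr (P (a1 # as))) = - B a1 (pr (P (a0 # as)))" .
  qed
qed

lemma Phi_skew: "skew_form scale GG n (\<lambda>ws. B x (P ws))"
  unfolding skew_form_def
proof (rule conjI)
  show "\<forall>as i y z c. set as \<subseteq> GG \<and> length as = n \<and> i < n \<and> y \<in> GG \<and> z \<in> GG \<longrightarrow>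
        B x (P (as[i := y + z])) = B x (P (as[i := y])) + B x (P (as[i := z])) \<and>
        B x (P (as[i := scale c y])) = c * B x (P (as[i := y]))"
  proof (intro allI impI)
    fix as :: "'v list" and i and y z :: 'v and c :: 'k
    assume h: "set as \<subseteq> GG \<and> length as = n \<and> i < n \<and> y \<in> GG \<and> z \<in> GG"
    show "B x (P (as[i := y + z])) = B x (P (as[i := y])) + B x (P (as[i := z])) \<and>
          B x (P (as[i := scale c y])) = c * B x (P (as[i := y]))"
      using h P_add[of as i y z] P_scale[of as i c y] by (simp add: B_add2 B_scale2)
  qed
  show "\<forall>as i. set as \<subseteq> GG \<and> length as = n \<and> Suc i < n \<longrightarrow>
        B x (P (as[i := as ! Suc i, Suc i := as ! i])) = - B x (P as)"
  proof (intro allI impI)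
    fix as :: "'v list" and i
    assume h: "set as \<subseteq> GG \<and> length as = n \<and> Suc i < n"
    show "B x (P (as[i := as ! Suc i, Suc i := as ! i])) = - B x (P as)"
      using h P_skew[of as i] by (simp add: B_neg2)
  qed

qed

lemma iso: "iso_to_double_ext_psi1 scale B P n"
  unfolding iso_to_double_ext_psi1_def
proof (intro exI conjI)
  show "ssia scale GG B (\<lambda>ws. pr (P ws)) n" by (rule G_ssia)
  show "skew_form scale GG n (\<lambda>ws. B x (P ws))" by (rule Phi_skew)
  show "\<forall>as. set as \<subseteq> GG \<times> UNIV \<and> length as = n \<longrightarrow> (\<lambda>as. ff (P (map fi as))) as \<in> GG \<times> UNIV"
    using pr_G by (simp add: ff_def)
  show "bij_betw ff UNIV (GG \<times> UNIV)"
    by (rule bij_betw_byWitness[where f' = fi]) (auto simp: fi_ff ff_fi, auto simp: ff_def pr_G)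
  show "\<forall>v w. ff (v + w) = ff v + ff w" by (simp add: ff_def pr_add B_add1)
  show "\<forall>c v. ff (scale c v) = dscale scale c (ff v)" by (simp add: ff_def dscale_def pr_scale B_scale1)
  show "\<forall>v w. dform B (ff v) (ff w) = B v w" by (simp add: ff_form)
  show "\<forall>as. length as = n \<longrightarrow> ff (P as) = (\<lambda>as. ff (P (map fi as))) (map ff as)"
    by (simp add: comp_def fi_ff)
  show "\<forall>a0 as. a0 \<in> GG \<times> UNIV \<and> set as \<subseteq> GG \<times> UNIV \<and> length as = n \<longrightarrow>
      dform B a0 ((\<lambda>as. ff (P (map fi as))) as) = dext_omega B (\<lambda>ws. pr (P ws)) (\<lambda>ws. B x (P ws)) n (a0 # as)"
  proof (intro allI impI, elim conjE)
    fix a0 :: "'v \<times> 'k \<times> 'k" and as :: "('v \<times> 'k \<times> 'k) list"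
    assume a0: "a0 \<in> GG \<times> UNIV" and as: "set as \<subseteq> GG \<times> UNIV" and l: "length as = n"
    let ?L = "a0 # as"
    have "dform B a0 (ff (P (map fi as))) = dform B (ff (fi a0)) (ff (P (map fi as)))"
      using ff_fi[OF a0] by simp
    also have "\<dots> = B (fi a0) (P (map fi as))" by (rule ff_form)
    also have "\<dots> = omega (map fi ?L)" by simp
    also have "\<dots> = omega (map fst ?L) + (\<Sum>i<Suc n. fst (snd (?L ! i)) * ((-1) ^ i * B x (P (del_nth i (map fst ?L)))))"
      unfolding fi_def by (rule expand[OF Z]) (use l in simp_all)
    also have "omega (map fst ?L) = B (fst a0) (pr (P (map fst as)))"
      using B_G_pr[of "fst a0"] a0 by auto
    also have "(\<Sum>i<Suc n. fst (snd (?L ! i)) * ((-1) ^ i * B x (P (del_nth i (map fst ?L))))) =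
        (\<Sum>i<Suc n. (-1) ^ i * fst (snd (?L ! i)) * B x (P (map fst (del_nth i ?L))))"
      by (simp add: del_nth_map algebra_simps)
    finally show "dform B a0 ((\<lambda>as. ff (P (map fi as))) as) = dext_omega B (\<lambda>ws. pr (P ws)) (\<lambda>ws. B x (P ws)) n (a0 # as)"
      unfolding dext_omega_def by simp
  qed
qed

end


lemma Zlemma:
  assumes eI: "\<And>y. y \<in> I \<Longrightarrow> B y e = 0" and xe: "B x e = 1"
    and W: "\<And>w. B w e = 0 \<Longrightarrow> w \<in> I" and l: "length ws = n"
  shows "B e (P ws) = 0"
proof -
  have C: "B e (P (w # q)) = B w e * B e (P (x # q))" if lq: "length q = n - 1" for w q
  proof -
    define c where "c = B w e"
    define i1 where "i1 = w - scale c x"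
    have "B i1 e = 0" unfolding i1_def c_def by (simp add: B_diff1 B_scale1 xe)
    hence i1I: "i1 \<in> I" by (rule W)
    have w: "w = i1 + scale c x" unfolding i1_def by simp
    have lwq: "length (w # q) = n" using lq n2 by simp
    have n0: "0 < n" using n2 by simp
    have "P (w # q) = P ((w # q)[0 := i1 + scale c x])" using w by simp
    also have "\<dots> = P ((w # q)[0 := i1]) + scale c (P ((w # q)[0 := x]))"
      using P_add[OF lwq n0] P_scale[OF lwq n0] by simp
    finally have "P (w # q) = P (i1 # q) + scale c (P (x # q))" by simp
    moreover have "B e (P (i1 # q)) = 0" using eI[OF P_I[OF lq i1I]] B_sym by metis
    ultimately show ?thesis unfolding c_def by (simp add: B_add2 B_scale2)
  qed
  have ws: "ws = hd ws # hd (tl ws) # tl (tl ws)" using l n2 by (cases ws; cases "tl ws") auto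
  define w1 where "w1 = hd ws"
  define w2 where "w2 = hd (tl ws)"
  define rest where "rest = tl (tl ws)"
  have ws': "ws = w1 # w2 # rest" using ws unfolding w1_def w2_def rest_def .
  have lr: "length rest = n - 2" using l ws' by simp
  have "B e (P ws) = B w1 e * B e (P (x # w2 # rest))" unfolding ws' by (rule C) (use lr n2 in simp)
  also have "P (x # w2 # rest) = - P (w2 # x # rest)"
    using swap[of "[]" w2 x rest] lr n2 by simp
  also have "B e (- P (w2 # x # rest)) = - (B w2 e * B e (P (x # x # rest)))"
    using C[of "x # rest" w2] lr n2 by (simp add: B_neg2)
  also have "P (x # x # rest) = 0" using P_double[OF lr] .
  finally show ?thesis by simp
qed

lemma main: "iso_to_double_ext_psi1 scale B P n"
proof -
  obtain e where e0: "e \<noteq> 0" and eI: "\<And>y. y \<in> I \<Longrightarrow> B y e = 0" using D2 by blast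
  define J where "J = {v. \<forall>y\<in>I. B y v = 0}"
  have eJ: "e \<in> J" unfolding J_def using eI by simp
  have J_ideal: "ideal scale UNIV P n J"
    unfolding ideal_def
  proof (intro conjI allI impI)
    show "subspace J" unfolding J_def by (rule subspaceI) (auto simp: B_add2 B_scale2)
    show "J \<subseteq> UNIV" by simp
    fix as :: "'v list" and y :: 'v assume h: "set as \<subseteq> UNIV \<and> length as = n - 1 \<and> y \<in> J"
    show "P (as @ [y]) \<in> J" unfolding J_def
    proof (intro CollectI ballI)
      fix b assume b: "b \<in> I"
      have la: "length as = n - 1" using h by simp
      have "P (as @ y # []) = scale ((-1) ^ length as) (P (y # as @ []))"
        by (rule move) (use la n2 in simp)
      hence "B b (P (as @ [y])) = (-1) ^ length as * B b (P (y # as))" by (simp add: B_scale2)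
      also have "B b (P (y # as)) = - B y (P (b # as))" using P_inv[OF la] .
      also have "B y (P (b # as)) = 0"
        using h P_I[OF la b] B_sym unfolding J_def by auto
      finally show "B b (P (as @ [y])) = 0" by simp
    qed
  qed
  have eInI: "e \<in> I"
  proof (rule ccontr)
    assume ne: "e \<notin> I"
    have sp: "span (insert e I) = UNIV" using D1[OF ne] .
    have dec: "\<exists>k. v - scale k e \<in> I" for v
    proof -
      have "v \<in> span (insert e I)" using sp by simp
      thus ?thesis unfolding span_insert span_I by simp
    qed
    have zero: "y = 0" if h1: "\<forall>i\<in>I. B y i = 0" and h2: "B y e = 0" for y
    proof (rule nondeg)
      fix v
      obtain k where k: "v - scale k e \<in> I" using dec by blast
      have "B y v = B y (v - scale k e) + k * B y e" by (simp add: B_diff2 B_scale2)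
      thus "B y v = 0" using h1 h2 k by simp
    qed
    have "\<exists>I J. ideal scale UNIV P n I \<and> ideal scale UNIV P n J \<and> I \<noteq> {0} \<and> J \<noteq> {0} \<and>
             I \<inter> J = {0} \<and> {x + y | x y. x \<in> I \<and> y \<in> J} = UNIV \<and>
             nondeg_on B I \<and> nondeg_on B J"
    proof (intro exI conjI)
      show "ideal scale UNIV P n I" by (rule I_ideal_all)
      show "ideal scale UNIV P n J" by (rule J_ideal)
      show "I \<noteq> {0}" by (rule I_nz)
      show "J \<noteq> {0}" using eJ e0 by blast
      show "I \<inter> J = {0}"
      proof
        show "I \<inter> J \<subseteq> {0}"
        proof
          fix y assume y: "y \<in> I \<inter> J"
          have "\<forall>i\<in>I. B y i = 0" using y B_sym unfolding J_def by auto
          moreover have "B y e = 0" using y eI by simp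
          ultimately show "y \<in> {0}" using zero by simp
        qed
        show "{0} \<subseteq> I \<inter> J" using I_sub subspace_0 unfolding J_def by auto
      qed
      show "{x + y | x y. x \<in> I \<and> y \<in> J} = UNIV"
      proof (intro set_eqI iffI)
        fix v :: 'v
        obtain k where k: "v - scale k e \<in> I" using dec by blast
        have "scale k e \<in> J" using eI unfolding J_def by (simp add: B_scale2)
        moreover have "v = (v - scale k e) + scale k e" by simp
        ultimately show "v \<in> {x + y | x y. x \<in> I \<and> y \<in> J}" using k by blast
      qed simp
      show "nondeg_on B I" unfolding nondeg_on_def
        using zero eI by blast
      show "nondeg_on B J" unfolding nondeg_on_def
      proof (intro ballI impI)
        fix y assume y: "y \<in> J" and h: "\<forall>z\<in>J. B y z = 0"
        have "\<forall>i\<in>I. B y i = 0" using y B_sym unfolding J_def by auto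
        moreover have "B y e = 0" using h eJ by simp
        ultimately show "y = 0" using zero by simp
      qed
    qed
    thus False using irr unfolding irreducible_def by blast
  qed
  have ee: "B e e = 0" using eI[OF eInI] .
  have perp: False if sp: "span (insert w I) = UNIV" and we: "B w e = 0" for w
  proof -
    have "e = 0"
    proof (rule nondeg)
      fix v
      have "v \<in> span (insert w I)" using sp by simp
      moreover have "B e b = 0" if "b \<in> insert w I" for b
        using that we eI B_sym by auto
      ultimately show "B e v = 0" using B_span_zero by blast
    qed
    thus False using e0 by simp
  qed
  obtain z where z: "z \<notin> I" using I_ne by blast
  have zeI: "B z e \<noteq> 0" using perp D1[OF z] by blast
  have W: "w \<in> I" if "B w e = 0" for w using perp D1 that by blast
  define x1 where "x1 = scale (1 / B z e) z"
  have x1e: "B x1 e = 1" using zeI by (simp add: x1_def B_scale1)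
  have ex1: "B e x1 = 1" using x1e B_sym by metis
  define x where "x = x1 - scale (B x1 x1 / 2) e"
  have xe: "B x e = 1" by (simp add: x_def B_diff1 B_scale1 x1e ee)
  have xx: "B x x = 0" by (simp add: x_def B_diff1 B_diff2 B_scale1 B_scale2 x1e ex1 ee)
  have Z: "B e (P ws) = 0" if "length ws = n" for ws
    using Zlemma[OF eI xe W that] by blast
  show ?thesis using iso[OF eI xe xx ee Z] by blast
qed

end

lemma dx_main:
  fixes scale :: "'k::field_char_0 \<Rightarrow> 'v::ab_group_add \<Rightarrow> 'v"
  assumes "vector_space scale" "ssia scale UNIV B P n" "irreducible scale UNIV B P n"
    "maximal_nontrivial_ideal scale UNIV P n I"
    "vector_space.dim scale (UNIV :: 'v set) = vector_space.dim scale I + 1" "2 \<le> n"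
  shows "iso_to_double_ext_psi1 scale B P n"
proof -
  interpret dx scale B P n I
    using assms unfolding dx_def dx_axioms_def by blast
  show ?thesis by (rule main)
qed

theorem corollary2:
  fixes n :: nat
  assumes "2 \<le> n"
  shows
   "(\<forall>(scale :: real \<Rightarrow> 'v::ab_group_add \<Rightarrow> 'v) B P I.
        vector_space scale \<and> ssia scale UNIV B P n \<and>
        irreducible scale UNIV B P n \<and> \<not> simple scale UNIV P n \<and>
        maximal_nontrivial_ideal scale UNIV P n I \<and>
        vector_space.dim scale (UNIV :: 'v set) = vector_space.dim scale I + 1
      \<longrightarrow> iso_to_double_ext_psi1 scale B P n) \<and>
    (\<forall>(scale :: complex \<Rightarrow> 'w::ab_group_add \<Rightarrow> 'w) B P I.
        vector_space scale \<and> ssia scale UNIV B P n \<and>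
        irreducible scale UNIV B P n \<and> \<not> simple scale UNIV P n \<and>
        maximal_nontrivial_ideal scale UNIV P n I \<and>
        vector_space.dim scale (UNIV :: 'w set) = vector_space.dim scale I + 1
      \<longrightarrow> iso_to_double_ext_psi1 scale B P n)"
proof (intro conjI allI impI)
  fix scale :: "real \<Rightarrow> 'v::ab_group_add \<Rightarrow> 'v" and B P I
  assume h: "vector_space scale \<and> ssia scale UNIV B P n \<and>
        irreducible scale UNIV B P n \<and> \<not> simple scale UNIV P n \<and>
        maximal_nontrivial_ideal scale UNIV P n I \<and>
        vector_space.dim scale (UNIV :: 'v set) = vector_space.dim scale I + 1"
  show "iso_to_double_ext_psi1 scale B P n"
    using dx_main[of scale B P n I] h assms by blast
next
  fix scale :: "complex \<Rightarrow> 'w::ab_group_add \<Rightarrow> 'w" and B P I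
  assume h: "vector_space scale \<and> ssia scale UNIV B P n \<and>
        irreducible scale UNIV B P n \<and> \<not> simple scale UNIV P n \<and>
        maximal_nontrivial_ideal scale UNIV P n I \<and>
        vector_space.dim scale (UNIV :: 'w set) = vector_space.dim scale I + 1"
  show "iso_to_double_ext_psi1 scale B P n"
    using dx_main[of scale B P n I] h assms by blast
qed

end
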